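(* Let $V,W$ be finite-dimensional vector spaces over $\mathbb{F}_q$, and let $\varphi_V:\mathbb{F}_q^\nu\to V$, $\varphi_W:\mathbb{F}_q^\nu\to W$ be parent functions of spanning projective point families $\mathcal{F}_V\subset V$, $\mathcal{F}_W\subset W$ (each of size $\nu$), with parent codes $P_V=\ker\varphi_V$, $P_W=\ker\varphi_W$. Let $\mathcal{H}(P_V,P_W)$ be the set of linear Hamming isometries $\hat L$ of $\mathbb{F}_q^\nu$ with $\hat L(P_V)=P_W$, and $\mathrm{Isom}_{\mathcal{F}}(V,W)$ the set of projective isometries $(V,\operatorname{wt}_{\mathcal{F}_V})\to(W,\operatorname{wt}_{\mathcal{F}_W})$. Then: (a) for every $\hat L\in\mathcal{H}(P_V,P_W)$ there is a unique $L\in\mathrm{Isom}_{\mathcal{F}}(V,W)$ with $L\circ\varphi_V=\varphi_W\circ\hat L$, and the map $\Phi:\hat L\mapsto L$ is a bijection $\mathcal{H}(P_V,P_W)\to\mathrm{Isom}_{\mathcal{F}}(V,W)$; (b) $\Phi$ is compatible with composition: for three such spaces $U_1,U_2,U_3$ with parent functions and parent codes $P_1,P_2,P_3$, and $\hat L\in\mathcal{H}(P_1,P_2)$, $\hat T\in\mathcal{H}(P_2,P_3)$, one has $\Phi(\hat T\circ\hat L)=\Phi(\hat T)\circ\Phi(\hat L)$; (c) for any linear subspaces $\mathcal{D}_V\le V$, $\mathcal{D}_W\le W$, $\Phi$ restricts to a bijection from $\{\hat L\in\mathcal{H}(P_V,P_W):\hat L(\varphi_V^{-1}(\mathcal{D}_V))=\varphi_W^{-1}(\mathcal{D}_W)\}$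 onto $\{L\in\mathrm{Isom}_{\mathcal{F}}(V,W): L(\mathcal{D}_V)=\mathcal{D}_W\}$.
   Context: A spanning projective point family in $V$ is a set $\mathcal{F}$ of pairwise linearly independent nonzero vectors (distinct 1-dimensional subspaces) spanning $V$; its projective weight is $\operatorname{wt}_{\mathcal{F}}(x)=\min\{|I|:I\subseteq\mathcal{F},x\in\langle I\rangle\}$. A parent function of $\mathcal{F}$ with $|\mathcal{F}|=\nu$ is a linear map $\varphi:\mathbb{F}_q^\nu\to V$ with $\{\langle\varphi(e_i)\rangle\}_{i=1}^\nu=\mathcal{F}$ ($e_i$ standard basis vectors); $\ker\varphi$ is the parent code. A linear Hamming isometry of $\mathbb{F}_q^\nu$ is a linear bijection preserving Hamming weight. A projective isometry $V\to W$ is an invertible linear map $L$ with $\operatorname{wt}_{\mathcal{F}_W}(L(x))=\operatorname{wt}_{\mathcal{F}_V}(x)$ for all $x$. *)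

theory Defs
  imports "HOL-Analysis.Analysis"
begin

text \<open>Ambient field: a finite field F_q, rendered as a type 'a of class {finite, field}.
  A vector space V over it is a type 'v with scalar multiplication sV.
  The coordinate space F_q^nu is 'a^'i for a finite index type 'i, nu = CARD('i).\<close>

definition fd_space :: "('a::field \<Rightarrow> 'v::ab_group_add \<Rightarrow> 'v) \<Rightarrow> bool" where
  "fd_space sV \<longleftrightarrow> vector_space sV \<and> (\<exists>B. finite_dimensional_vector_space sV B)"

text \<open>Spanning projective point family: pairwise linearly independent nonzero vectors spanning V.\<close>
definition spanning_ppf :: "('a::field \<Rightarrow> 'v::ab_group_add \<Rightarrow> 'v) \<Rightarrow> 'v set \<Rightarrow> bool" where
  "spanning_ppf sV F \<longleftrightarrow>
     0 \<notin> F \<and>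
     (\<forall>x\<in>F. \<forall>y\<in>F. x \<noteq> y \<longrightarrow> \<not> module.dependent sV {x, y}) \<and>
     module.span sV F = UNIV"

text \<open>Projective weight.\<close>
definition proj_wt :: "('a::field \<Rightarrow> 'v::ab_group_add \<Rightarrow> 'v) \<Rightarrow> 'v set \<Rightarrow> 'v \<Rightarrow> nat" where
  "proj_wt sV F x = (LEAST n. \<exists>I. I \<subseteq> F \<and> finite I \<and> card I = n \<and> x \<in> module.span sV I)"

text \<open>Parent function of F (with |F| = nu = CARD('i)).\<close>
definition parent_fun ::
  "('a::field \<Rightarrow> 'v::ab_group_add \<Rightarrow> 'v) \<Rightarrow> 'v set \<Rightarrow> ('a^'i::finite \<Rightarrow> 'v) \<Rightarrow> bool" where
  "parent_fun sV F \<phi> \<longleftrightarrow>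
     Vector_Spaces.linear (*s) sV \<phi> \<and> card F = CARD('i) \<and>
     (\<lambda>i. module.span sV {\<phi> (axis i 1)}) ` UNIV = (\<lambda>f. module.span sV {f}) ` F"

definition parent_code :: "('a::field^'i::finite \<Rightarrow> 'v::ab_group_add) \<Rightarrow> ('a^'i) set" where
  "parent_code \<phi> = {x. \<phi> x = 0}"

text \<open>Full hypotheses on a space with a parent function.\<close>
definition parent_setup ::
  "('a::field \<Rightarrow> 'v::ab_group_add \<Rightarrow> 'v) \<Rightarrow> 'v set \<Rightarrow> ('a^'i::finite \<Rightarrow> 'v) \<Rightarrow> bool" where
  "parent_setup sV F \<phi> \<longleftrightarrow> fd_space sV \<and> spanning_ppf sV F \<and> parent_fun sV F \<phi>"

definition hamming_wt :: "'a::zero^'i::finite \<Rightarrow> nat" where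
  "hamming_wt x = card {i. x $ i \<noteq> 0}"

definition hamming_isometry :: "('a::field^'i::finite \<Rightarrow> 'a^'i) \<Rightarrow> bool" where
  "hamming_isometry L \<longleftrightarrow> Vector_Spaces.linear (*s) (*s) L \<and> bij L \<and>
     (\<forall>x. hamming_wt (L x) = hamming_wt x)"

text \<open>The set H(P_V, P_W).\<close>
definition Hset :: "('a::field^'i::finite) set \<Rightarrow> ('a^'i) set \<Rightarrow> ('a^'i \<Rightarrow> 'a^'i) set" where
  "Hset PV PW = {L. hamming_isometry L \<and> L ` PV = PW}"

text \<open>Projective isometries (V, wt_FV) -> (W, wt_FW).\<close>
definition proj_isom ::
  "('a::field \<Rightarrow> 'v::ab_group_add \<Rightarrow> 'v) \<Rightarrow> 'v set \<Rightarrow>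
   ('a \<Rightarrow> 'w::ab_group_add \<Rightarrow> 'w) \<Rightarrow> 'w set \<Rightarrow> ('v \<Rightarrow> 'w) set" where
  "proj_isom sV FV sW FW = {L. Vector_Spaces.linear sV sW L \<and> bij L \<and>
      (\<forall>x. proj_wt sW FW (L x) = proj_wt sV FV x)}"

text \<open>The map Phi: Lhat to the unique projective isometry L with L o phiV = phiW o Lhat.\<close>
definition Phi ::
  "('a::field \<Rightarrow> 'v::ab_group_add \<Rightarrow> 'v) \<Rightarrow> 'v set \<Rightarrow> ('a^'i::finite \<Rightarrow> 'v) \<Rightarrow>
   ('a \<Rightarrow> 'w::ab_group_add \<Rightarrow> 'w) \<Rightarrow> 'w set \<Rightarrow> ('a^'i \<Rightarrow> 'w) \<Rightarrow>
   ('a^'i \<Rightarrow> 'a^'i) \<Rightarrow> ('v \<Rightarrow> 'w)" where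
  "Phi sV FV \<phi>V sW FW \<phi>W Lh =
     (THE L. L \<in> proj_isom sV FV sW FW \<and> L \<circ> \<phi>V = \<phi>W \<circ> Lh)"

end

theory Submission
  imports Defs
begin

lemma Least_eq_mutual:
  fixes P Q :: "nat \<Rightarrow> bool"
  assumes ex: "\<exists>n. P n"
    and pq: "\<And>n. P n \<Longrightarrow> \<exists>m\<le>n. Q m"
    and qp: "\<And>n. Q n \<Longrightarrow> \<exists>m\<le>n. P m"
  shows "Least P = Least Q"
proof -
  have P: "P (Least P)" using ex by (rule LeastI_ex)
  then obtain m where m: "m \<le> Least P" "Q m" using pq by blast
  have LQ: "Least Q \<le> m" using m(2) by (rule Least_le)
  have Q: "Q (Least Q)" using m(2) by (rule LeastI)
  then obtain k where k: "k \<le> Least Q" "P k" using qp by blast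
  have "Least P \<le> k" using k(2) by (rule Least_le)
  then show ?thesis using k m LQ by linarith
qed

lemma lin_expand:
  fixes f :: "'a::field^'i::finite \<Rightarrow> 'v::ab_group_add"
  assumes "Vector_Spaces.linear (*s) s f"
  shows "f x = (\<Sum>i\<in>UNIV. s (x$i) (f (axis i 1)))"
proof -
  interpret f: Vector_Spaces.linear "(*s)" s f by fact
  have "f x = f (\<Sum>i\<in>UNIV. (x$i) *s axis i 1)" by (simp add: basis_expansion)
  also have "\<dots> = (\<Sum>i\<in>UNIV. s (x$i) (f (axis i 1)))" by (simp add: f.sum f.scale)
  finally show ?thesis .
qed

lemma lin_eq_axes:
  fixes f g :: "'a::field^'i::finite \<Rightarrow> 'v::ab_group_add"
  assumes "Vector_Spaces.linear (*s) s f" "Vector_Spaces.linear (*s) s g"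
    and "\<And>i. f (axis i 1) = g (axis i 1)"
  shows "f = g"
proof
  fix x show "f x = g x" unfolding lin_expand[OF assms(1), of x] lin_expand[OF assms(2), of x] assms(3) ..
qed

lemma hw_le1:
  fixes y :: "'a::field^'i::finite"
  assumes "hamming_wt y \<le> 1"
  shows "\<exists>i. y = (y$i) *s axis i 1"
proof (cases "y = 0")
  case True then show ?thesis by simp
next
  case False
  then obtain i where i: "y$i \<noteq> 0" by (metis vec_eq_iff zero_index)
  have "{j. y$j \<noteq> 0} = {i}"
  proof -
    have "i \<in> {j. y$j \<noteq> 0}" using i by simp
    moreover have "card {j. y$j \<noteq> 0} \<le> 1" using assms by (simp add: hamming_wt_def)
    ultimately have c: "{i, j} \<subseteq> {j. y$j \<noteq> 0} \<Longrightarrow> card {i, j} \<le> 1" for j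
      by (meson card_mono finite dual_order.trans)
    then have "x = i" if "y$x \<noteq> 0" for x
    proof -
      have "{i, x} \<subseteq> {j. y$j \<noteq> 0}" using that i by blast
      then have "card {i, x} \<le> 1" by (rule c)
      then show "x = i" by (cases "x = i") auto
    qed
    then show ?thesis using i by blast
  qed
  then have "y$j = 0" if "j \<noteq> i" for j using that by blast
  then have "y = (y$i) *s axis i 1"
    unfolding vec_eq_iff by (auto simp: axis_def)
  then show ?thesis by blast
qed

lemma hw_axis: "hamming_wt (c *s axis i (1::'a::field) :: 'a^'i::finite) \<le> 1"
proof -
  have "{j. (c *s axis i (1::'a) :: 'a^'i) $ j \<noteq> 0} \<subseteq> {i}" by (auto simp: axis_def)
  then have "card {j. (c *s axis i (1::'a) :: 'a^'i) $ j \<noteq> 0} \<le> card {i}" by (intro card_mono) auto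
  then show ?thesis unfolding hamming_wt_def by simp
qed

lemma hw_zero_iff: "hamming_wt (x::'a::zero^'i::finite) = 0 \<longleftrightarrow> x = 0"
  by (auto simp: hamming_wt_def vec_eq_iff)

lemma supp_span:
  fixes y :: "'a::field^'i::finite"
  assumes "y \<in> vec.span ((\<lambda>i. axis i 1) ` J)"
  shows "{i. y$i \<noteq> 0} \<subseteq> J"
proof -
  let ?S = "{y::'a^'i. \<forall>i. i \<notin> J \<longrightarrow> y$i = 0}"
  have "vec.subspace ?S" by (auto simp: vec.subspace_def)
  moreover have "(\<lambda>i. axis i 1) ` J \<subseteq> ?S" by (auto simp: axis_def)
  ultimately have "vec.span ((\<lambda>i. axis i 1) ` J) \<subseteq> ?S" by (rule vec.span_minimal[rotated])
  then show ?thesis using assms by auto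
qed

locale psetup =
  fixes s :: "'a::{finite,field} \<Rightarrow> 'v::ab_group_add \<Rightarrow> 'v"
    and F :: "'v set"
    and \<phi> :: "'a^'i::finite \<Rightarrow> 'v"
  assumes ps: "parent_setup s F \<phi>"

sublocale psetup \<subseteq> vs: vector_space s
  using ps unfolding parent_setup_def fd_space_def by auto

sublocale psetup \<subseteq> lin: Vector_Spaces.linear "(*s)" s \<phi>
  using ps unfolding parent_setup_def parent_fun_def by auto

context psetup begin

lemma lin_phi: "Vector_Spaces.linear (*s) s \<phi>"
  using ps unfolding parent_setup_def parent_fun_def by auto

lemma lines: "(\<lambda>i. vs.span {\<phi> (axis i 1)}) ` UNIV = (\<lambda>f. vs.span {f}) ` F"
  using ps unfolding parent_setup_def parent_fun_def by auto

lemma cardF: "card F = CARD('i)"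
  using ps unfolding parent_setup_def parent_fun_def by auto

lemma finF: "finite F"
proof -
  have "CARD('i) > 0" by simp
  then show ?thesis using cardF card_gt_0_iff by metis
qed

lemma zero_notin: "0 \<notin> F"
  using ps unfolding parent_setup_def spanning_ppf_def by auto

lemma pairwise: "x \<in> F \<Longrightarrow> y \<in> F \<Longrightarrow> x \<noteq> y \<Longrightarrow> \<not> vs.dependent {x, y}"
  using ps unfolding parent_setup_def spanning_ppf_def by auto

lemma spanF: "vs.span F = UNIV"
  using ps unfolding parent_setup_def spanning_ppf_def by auto

lemma line_eq:
  assumes "a \<in> vs.span {b}" "a \<noteq> 0"
  shows "vs.span {a} = vs.span {b}"
proof -
  obtain k where k: "a = s k b" using assms(1) unfolding vs.span_singleton by auto
  have "k \<noteq> 0" using k assms(2) by auto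
  then have "b = s (inverse k) a" using k by simp
  then have "b \<in> vs.span {a}" by (simp add: vs.span_base vs.span_scale)
  then show ?thesis using assms(1) unfolding vs.span_eq by (auto intro: vs.span_base)
qed

lemma inj_lines_F: "inj_on (\<lambda>f. vs.span {f}) F"
proof (rule inj_onI)
  fix x y assume xy: "x \<in> F" "y \<in> F" "vs.span {x} = vs.span {y}"
  show "x = y"
  proof (rule ccontr)
    assume ne: "x \<noteq> y"
    have "x \<in> vs.span {y}" using xy(3) vs.span_base[of x "{x}"] by auto
    then have "vs.dependent {x, y}"
      unfolding vs.dependent_def using ne by (intro bexI[of _ x]) (auto simp: insert_Diff_if)
    then show False using pairwise xy ne by blast
  qed
qed

lemma inj_lines: "inj (\<lambda>i. vs.span {\<phi> (axis i 1)})"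
proof -
  have "card ((\<lambda>i. vs.span {\<phi> (axis i 1)}) ` UNIV) = card ((\<lambda>f. vs.span {f}) ` F)"
    using lines by simp
  also have "\<dots> = card F" using inj_lines_F by (rule card_image)
  also have "\<dots> = card (UNIV :: 'i set)" using cardF by simp
  finally show ?thesis by (intro eq_card_imp_inj_on) auto
qed

lemma line_of_index: "\<exists>f\<in>F. vs.span {\<phi> (axis i 1)} = vs.span {f}"
  using lines by blast

lemma index_of_line: "f \<in> F \<Longrightarrow> \<exists>i. vs.span {\<phi> (axis i 1)} = vs.span {f}"
  using lines by (metis (mono_tags, lifting) image_iff rangeE)

lemma phi_axis_nz: "\<phi> (axis i 1) \<noteq> 0"
proof
  assume z: "\<phi> (axis i 1) = 0"
  obtain f where f: "f \<in> F" "vs.span {\<phi> (axis i 1)} = vs.span {f}" using line_of_index by blast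
  have "f \<in> vs.span {f}" by (rule vs.span_base) simp
  have "vs.span {0::'v} = {0}" unfolding vs.span_singleton by auto
  then have "f \<in> {0}" using f(2) z \<open>f \<in> vs.span {f}\<close> by metis
  then have "f = 0" by simp
  then show False using f(1) zero_notin by simp
qed

lemma surj_phi: "surj \<phi>"
proof -
  have "F \<subseteq> range \<phi>"
  proof
    fix f assume f: "f \<in> F"
    obtain i where i: "vs.span {\<phi> (axis i 1)} = vs.span {f}" using index_of_line[OF f] by blast
    have "f \<in> vs.span {\<phi> (axis i 1)}" using i vs.span_base[of f "{f}"] by simp
    then obtain k where "f = s k (\<phi> (axis i 1))" unfolding vs.span_singleton by auto
    then have "f = \<phi> (k *s axis i 1)" by (simp add: lin.scale)
    then show "f \<in> range \<phi>" by blast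
  qed
  moreover have "vs.subspace (range \<phi>)" using lin.subspace_image[OF vec.subspace_UNIV] by simp
  ultimately have "vs.span F \<subseteq> range \<phi>" by (rule vs.span_minimal)
  then show ?thesis using spanF by auto
qed

lemma uniq1:
  assumes "hamming_wt y \<le> 1" "hamming_wt y' \<le> 1" "\<phi> y = \<phi> y'"
  shows "y = y'"
proof -
  obtain j where j: "y = (y$j) *s axis j 1" using hw_le1[OF assms(1)] by blast
  obtain k where k: "y' = (y'$k) *s axis k 1" using hw_le1[OF assms(2)] by blast
  define c where "c = y$j"
  define c' where "c' = y'$k"
  have eq: "s c (\<phi> (axis j 1)) = s c' (\<phi> (axis k 1))"
  proof -
    have e1: "\<phi> y = s c (\<phi> (axis j 1))" unfolding c_def by (metis j lin.scale)
    have e2: "\<phi> y' = s c' (\<phi> (axis k 1))" unfolding c'_def by (metis k lin.scale)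
    show ?thesis using e1 e2 assms(3) by simp
  qed
  show ?thesis
  proof (cases "c = 0")
    case True
    then have "c' = 0" using eq phi_axis_nz by simp
    then show ?thesis using j k True c_def c'_def by simp
  next
    case False
    then have "c' \<noteq> 0" using eq phi_axis_nz by auto
    have jk: "j = k"
    proof (rule ccontr)
      assume "j \<noteq> k"
      have "\<phi> (axis j 1) = s (c' / c) (\<phi> (axis k 1))"
        using eq False by (metis vs.scale_scale vs.scale_one divide_inverse_commute left_inverse mult.commute)
      then have "\<phi> (axis j 1) \<in> vs.span {\<phi> (axis k 1)}"
        by (simp add: vs.span_base vs.span_scale)
      then have "vs.span {\<phi> (axis j 1)} = vs.span {\<phi> (axis k 1)}"
        using phi_axis_nz by (rule line_eq)
      then show False using inj_lines \<open>j \<noteq> k\<close> by (auto dest: injD)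
    qed
    then have "c = c'" using eq phi_axis_nz by simp
    then show ?thesis using j k jk c_def c'_def by simp
  qed
qed

end

context psetup begin

lemma wt_char: "proj_wt s F v = (LEAST n. \<exists>y. \<phi> y = v \<and> hamming_wt y = n)"
  unfolding proj_wt_def
proof (rule Least_eq_mutual)
  show "\<exists>n I. I \<subseteq> F \<and> finite I \<and> card I = n \<and> v \<in> vs.span I"
    using finF spanF by auto
next
  fix n assume "\<exists>I. I \<subseteq> F \<and> finite I \<and> card I = n \<and> v \<in> vs.span I"
  then obtain I where I: "I \<subseteq> F" "finite I" "card I = n" "v \<in> vs.span I" by blast
  have "\<forall>f\<in>I. \<exists>i. vs.span {\<phi> (axis i 1)} = vs.span {f}" using I(1) index_of_line by blast
  then obtain g where g: "\<forall>f\<in>I. vs.span {\<phi> (axis (g f) 1)} = vs.span {f}" by metis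
  define J where "J = g ` I"
  define A where "A = (\<lambda>i. axis i (1::'a)) ` J"
  have "I \<subseteq> vs.span (\<phi> ` A)"
  proof
    fix f assume f: "f \<in> I"
    have "f \<in> vs.span {\<phi> (axis (g f) 1)}" using g f vs.span_base[of f "{f}"] by simp
    moreover have "{\<phi> (axis (g f) 1)} \<subseteq> \<phi> ` A" using f unfolding A_def J_def by auto
    ultimately show "f \<in> vs.span (\<phi> ` A)" using vs.span_mono by blast
  qed
  then have "vs.span I \<subseteq> vs.span (\<phi> ` A)" using vs.span_minimal vs.subspace_span by blast
  then have "v \<in> \<phi> ` vec.span A" using I(4) lin.span_image by auto
  then obtain y where y: "y \<in> vec.span A" "v = \<phi> y" by blast
  have "{i. y$i \<noteq> 0} \<subseteq> J" using supp_span y(1) unfolding A_def by blast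
  then have "hamming_wt y \<le> card J" unfolding hamming_wt_def J_def using I(2) by (simp add: card_mono)
  also have "\<dots> \<le> n" unfolding J_def using I(3) card_image_le[OF I(2)] by simp
  finally show "\<exists>m\<le>n. \<exists>y. \<phi> y = v \<and> hamming_wt y = m" using y(2) by blast
next
  fix n assume "\<exists>y. \<phi> y = v \<and> hamming_wt y = n"
  then obtain y where y: "\<phi> y = v" "hamming_wt y = n" by blast
  have "\<forall>i. \<exists>f\<in>F. vs.span {\<phi> (axis i 1)} = vs.span {f}" using line_of_index by blast
  then obtain h where h: "\<And>i. h i \<in> F" "\<And>i. vs.span {\<phi> (axis i 1)} = vs.span {h i}" by metis
  define S where "S = {i. y$i \<noteq> 0}"
  define I where "I = h ` S"
  have IF: "I \<subseteq> F" using h unfolding I_def by auto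
  have fI: "finite I" unfolding I_def by simp
  have cI: "card I \<le> n" unfolding I_def using y(2) card_image_le[of S h] unfolding hamming_wt_def S_def by simp
  have "v = (\<Sum>i\<in>UNIV. s (y$i) (\<phi> (axis i 1)))" using lin_expand[OF lin_phi, of y] y(1) by simp
  also have "\<dots> \<in> vs.span I"
  proof (rule vs.span_sum)
    fix i :: 'i
    show "s (y$i) (\<phi> (axis i 1)) \<in> vs.span I"
    proof (cases "y$i = 0")
      case True then show ?thesis by (simp add: vs.span_zero)
    next
      case False
      then have "i \<in> S" unfolding S_def by simp
      have "\<phi> (axis i 1) \<in> vs.span {h i}" using h(2)[of i] vs.span_base[of "\<phi> (axis i 1)" "{\<phi> (axis i 1)}"] by simp
      moreover have "vs.span {h i} \<subseteq> vs.span I" using \<open>i \<in> S\<close> unfolding I_def by (intro vs.span_mono) auto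
      ultimately show ?thesis by (intro vs.span_scale) auto
    qed
  qed
  finally have "v \<in> vs.span I" .
  then show "\<exists>m\<le>n. \<exists>I. I \<subseteq> F \<and> finite I \<and> card I = m \<and> v \<in> vs.span I"
    using IF fI cI by blast
qed

lemma wt_le1: "proj_wt s F v \<le> 1 \<longleftrightarrow> (\<exists>y. \<phi> y = v \<and> hamming_wt y \<le> 1)"
proof
  assume a: "proj_wt s F v \<le> 1"
  obtain y0 where "\<phi> y0 = v" using surj_phi by (metis surjD)
  then have ex: "\<exists>n y. \<phi> y = v \<and> hamming_wt y = n" by blast
  have "\<exists>y. \<phi> y = v \<and> hamming_wt y = (LEAST n. \<exists>y. \<phi> y = v \<and> hamming_wt y = n)"
    using LeastI_ex[OF ex] .
  then show "\<exists>y. \<phi> y = v \<and> hamming_wt y \<le> 1" using a wt_char by metis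
next
  assume "\<exists>y. \<phi> y = v \<and> hamming_wt y \<le> 1"
  then obtain y where y: "\<phi> y = v" "hamming_wt y \<le> 1" by blast
  have "(LEAST n. \<exists>y. \<phi> y = v \<and> hamming_wt y = n) \<le> hamming_wt y"
    using y(1) by (intro Least_le) blast
  then show "proj_wt s F v \<le> 1" using wt_char y(2) by simp
qed

end

locale ppair = V: psetup sV FV \<phi>V + W: psetup sW FW \<phi>W
  for sV :: "'a::{finite,field} \<Rightarrow> 'v::ab_group_add \<Rightarrow> 'v" and FV :: "'v set"
    and \<phi>V :: "'a^'i::finite \<Rightarrow> 'v"
    and sW :: "'a \<Rightarrow> 'w::ab_group_add \<Rightarrow> 'w" and FW :: "'w set"
    and \<phi>W :: "'a^'i \<Rightarrow> 'w"

lemma hw_axis1: "hamming_wt (axis i (1::'a::field) :: 'a^'i::finite) \<le> 1"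
  using hw_axis[of 1 i] by simp

context ppair begin

abbreviation "PV \<equiv> parent_code \<phi>V"
abbreviation "PW \<equiv> parent_code \<phi>W"

lemma kernel_equiv:
  assumes "Lh \<in> Hset PV PW"
  shows "\<phi>W (Lh z) = \<phi>W (Lh x) \<longleftrightarrow> \<phi>V z = \<phi>V x"
proof -
  have hi: "hamming_isometry Lh" and im: "Lh ` PV = PW" using assms unfolding Hset_def by auto
  interpret Lh: Vector_Spaces.linear "(*s)" "(*s)" Lh using hi unfolding hamming_isometry_def by auto
  have inj: "inj Lh" using hi unfolding hamming_isometry_def bij_def by auto
  have "\<phi>W (Lh z) = \<phi>W (Lh x) \<longleftrightarrow> \<phi>W (Lh (z - x)) = 0"
    by (simp add: Lh.diff W.lin.diff)
  also have "\<dots> \<longleftrightarrow> Lh (z - x) \<in> PW" unfolding parent_code_def by simp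
  also have "\<dots> \<longleftrightarrow> z - x \<in> PV" unfolding im[symmetric] using inj by (simp add: inj_image_mem_iff)
  also have "\<dots> \<longleftrightarrow> \<phi>V z = \<phi>V x" unfolding parent_code_def by (simp add: V.lin.diff)
  finally show ?thesis .
qed

lemma H_to_L:
  assumes H: "Lh \<in> Hset PV PW"
  shows "\<exists>L. L \<in> proj_isom sV FV sW FW \<and> L \<circ> \<phi>V = \<phi>W \<circ> Lh"
proof -
  have hi: "hamming_isometry Lh" and im: "Lh ` PV = PW" using H unfolding Hset_def by auto
  interpret Lh: Vector_Spaces.linear "(*s)" "(*s)" Lh using hi unfolding hamming_isometry_def by auto
  have bijLh: "bij Lh" and hwLh: "\<And>x. hamming_wt (Lh x) = hamming_wt x"
    using hi unfolding hamming_isometry_def by auto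
  define L where "L v = \<phi>W (Lh (SOME x. \<phi>V x = v))" for v
  have Lphi: "L (\<phi>V x) = \<phi>W (Lh x)" for x
  proof -
    have "\<phi>V (SOME x'. \<phi>V x' = \<phi>V x) = \<phi>V x" by (rule someI) (rule refl)
    then show ?thesis unfolding L_def using kernel_equiv[OF H] by blast
  qed
  have sV: "\<And>v. \<exists>x. v = \<phi>V x" using V.surj_phi by (metis surjD)
  have sW: "\<And>w. \<exists>x. w = \<phi>W x" using W.surj_phi by (metis surjD)
  have lin: "Vector_Spaces.linear sV sW L"
    unfolding Vector_Spaces.linear_iff
  proof (intro conjI allI)
    show "vector_space sV" by (rule V.vs.vector_space_axioms)
    show "vector_space sW" by (rule W.vs.vector_space_axioms)
  next
    fix u v
    obtain x y where "u = \<phi>V x" "v = \<phi>V y" using sV by metis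
    then show "L (u + v) = L u + L v"
      by (metis Lphi V.lin.add Lh.add W.lin.add)
  next
    fix c u
    obtain x where "u = \<phi>V x" using sV by metis
    then show "L (sV c u) = sW c (L u)"
      by (metis Lphi V.lin.scale Lh.scale W.lin.scale)
  qed
  have inj: "inj L"
  proof (rule injI)
    fix u v assume e: "L u = L v"
    obtain x y where "u = \<phi>V x" "v = \<phi>V y" using sV by metis
    then show "u = v" using e Lphi kernel_equiv[OF H] by metis
  qed
  have surj: "surj L"
  proof -
    have "w \<in> range L" for w
    proof -
      obtain y where y: "w = \<phi>W y" using sW by metis
      obtain x where "y = Lh x" using bijLh by (metis bij_def surjD)
      then show ?thesis using y Lphi by (metis rangeI)
    qed
    then show ?thesis by blast
  qed
  have wt: "proj_wt sW FW (L v) = proj_wt sV FV v" for v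
  proof -
    obtain x where x: "v = \<phi>V x" using sV by metis
    have "(\<exists>y. \<phi>W y = \<phi>W (Lh x) \<and> hamming_wt y = n) \<longleftrightarrow> (\<exists>z. \<phi>V z = \<phi>V x \<and> hamming_wt z = n)" for n
    proof
      assume "\<exists>y. \<phi>W y = \<phi>W (Lh x) \<and> hamming_wt y = n"
      then obtain y where y: "\<phi>W y = \<phi>W (Lh x)" "hamming_wt y = n" by blast
      obtain z where "y = Lh z" using bijLh by (metis bij_def surjD)
      then show "\<exists>z. \<phi>V z = \<phi>V x \<and> hamming_wt z = n" using y hwLh kernel_equiv[OF H] by metis
    next
      assume "\<exists>z. \<phi>V z = \<phi>V x \<and> hamming_wt z = n"
      then obtain z where z: "\<phi>V z = \<phi>V x" "hamming_wt z = n" by blast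
      then show "\<exists>y. \<phi>W y = \<phi>W (Lh x) \<and> hamming_wt y = n" using hwLh kernel_equiv[OF H] by metis
    qed
    then have "(\<lambda>n. \<exists>y. \<phi>W y = \<phi>W (Lh x) \<and> hamming_wt y = n) = (\<lambda>n. \<exists>z. \<phi>V z = \<phi>V x \<and> hamming_wt z = n)"
      by (rule ext)
    then show ?thesis unfolding x Lphi W.wt_char V.wt_char by simp
  qed
  have "L \<in> proj_isom sV FV sW FW" unfolding proj_isom_def using lin inj surj wt by (auto simp: bij_def)
  moreover have "L \<circ> \<phi>V = \<phi>W \<circ> Lh" using Lphi by auto
  ultimately show ?thesis by blast
qed

end

lemma hw_sum_bound:
  fixes Y :: "'i::finite \<Rightarrow> 'a::field^'i"
  assumes "\<And>i. hamming_wt (Y i) \<le> 1"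
  shows "hamming_wt (\<Sum>i\<in>UNIV. (x$i) *s Y i) \<le> hamming_wt x"
proof -
  define S where "S = {i. x$i \<noteq> 0}"
  have sub: "{j. (\<Sum>i\<in>UNIV. (x$i) *s Y i) $ j \<noteq> 0} \<subseteq> (\<Union>i\<in>S. {j. Y i $ j \<noteq> 0})"
  proof
    fix j assume "j \<in> {j. (\<Sum>i\<in>UNIV. (x$i) *s Y i) $ j \<noteq> 0}"
    then have ne: "(\<Sum>i\<in>UNIV. x$i * Y i $ j) \<noteq> 0" by (simp add: sum_component)
    show "j \<in> (\<Union>i\<in>S. {j. Y i $ j \<noteq> 0})"
    proof (rule ccontr)
      assume "j \<notin> (\<Union>i\<in>S. {j. Y i $ j \<noteq> 0})"
      then have "\<And>i. x$i * Y i $ j = 0" unfolding S_def by auto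
      then have "(\<Sum>i\<in>UNIV. x$i * Y i $ j) = 0" by (intro sum.neutral) blast
      then show False using ne by blast
    qed
  qed
  have "hamming_wt (\<Sum>i\<in>UNIV. (x$i) *s Y i) \<le> card (\<Union>i\<in>S. {j. Y i $ j \<noteq> 0})"
    unfolding hamming_wt_def using sub by (intro card_mono) auto
  also have "\<dots> \<le> (\<Sum>i\<in>S. card {j. Y i $ j \<noteq> 0})" by (rule card_UN_le) simp
  also have "\<dots> \<le> (\<Sum>i\<in>S. 1)" using assms unfolding hamming_wt_def by (intro sum_mono) auto
  also have "\<dots> = hamming_wt x" unfolding S_def hamming_wt_def by simp
  finally show ?thesis .
qed

lemma lin_sum_map:
  fixes Y :: "'i::finite \<Rightarrow> 'a::field^'i"
  shows "Vector_Spaces.linear (*s) (*s) (\<lambda>x. \<Sum>i\<in>UNIV. (x$i) *s Y i)"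
  unfolding Vector_Spaces.linear_iff
proof (intro conjI allI)
  show "vector_space ((*s) :: 'a \<Rightarrow> 'a^'i \<Rightarrow> 'a^'i)" by (rule vec.vector_space_axioms)
  show "vector_space ((*s) :: 'a \<Rightarrow> 'a^'i \<Rightarrow> 'a^'i)" by (rule vec.vector_space_axioms)
next
  fix x y :: "'a^'i"
  show "(\<Sum>i\<in>UNIV. ((x + y)$i) *s Y i) = (\<Sum>i\<in>UNIV. (x$i) *s Y i) + (\<Sum>i\<in>UNIV. (y$i) *s Y i)"
    by (simp add: vec.scale_left_distrib sum.distrib)
next
  fix c :: 'a and x :: "'a^'i"
  show "(\<Sum>i\<in>UNIV. ((c *s x)$i) *s Y i) = c *s (\<Sum>i\<in>UNIV. (x$i) *s Y i)"
    by (simp add: vec.scale_sum_right)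
qed

context ppair begin

lemma construct:
  assumes lin: "Vector_Spaces.linear sV sW L"
    and w1: "\<And>v. proj_wt sV FV v \<le> 1 \<Longrightarrow> proj_wt sW FW (L v) \<le> 1"
  shows "\<exists>Lh. Vector_Spaces.linear (*s) (*s) Lh \<and> \<phi>W \<circ> Lh = L \<circ> \<phi>V \<and> (\<forall>x. hamming_wt (Lh x) \<le> hamming_wt x)"
proof -
  have "\<forall>i. \<exists>y. \<phi>W y = L (\<phi>V (axis i 1)) \<and> hamming_wt y \<le> 1"
  proof
    fix i :: 'i
    have "proj_wt sV FV (\<phi>V (axis i 1)) \<le> 1" using V.wt_le1 hw_axis1 by blast
    then show "\<exists>y. \<phi>W y = L (\<phi>V (axis i 1)) \<and> hamming_wt y \<le> 1" using w1 W.wt_le1 by blast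
  qed
  then obtain Y where Y: "\<And>i. \<phi>W (Y i) = L (\<phi>V (axis i 1))" "\<And>i. hamming_wt (Y i) \<le> 1" by metis
  define Lh where "Lh x = (\<Sum>i\<in>UNIV. (x$i) *s Y i)" for x
  have linLh: "Vector_Spaces.linear (*s) (*s) Lh" unfolding Lh_def[abs_def] by (rule lin_sum_map)
  have linC: "Vector_Spaces.linear (*s) sW (L \<circ> \<phi>V)"
    by (rule Vector_Spaces.linear_compose[OF V.lin_phi lin])
  have linC2: "Vector_Spaces.linear (*s) sW (\<phi>W \<circ> Lh)"
    by (rule Vector_Spaces.linear_compose[OF linLh W.lin_phi])
  have "\<phi>W \<circ> Lh = L \<circ> \<phi>V"
  proof (rule lin_eq_axes[OF linC2 linC])
    fix i :: 'i
    have "Lh (axis i 1) = Y i"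
    proof -
      have "Lh (axis i 1) = (\<Sum>k\<in>UNIV. (if k = i then Y i else 0))"
        unfolding Lh_def by (intro sum.cong) (auto simp: axis_def)
      then show ?thesis by simp
    qed
    then show "(\<phi>W \<circ> Lh) (axis i 1) = (L \<circ> \<phi>V) (axis i 1)" using Y(1) by simp
  qed
  moreover have "\<forall>x. hamming_wt (Lh x) \<le> hamming_wt x" unfolding Lh_def using hw_sum_bound Y(2) by blast
  ultimately show ?thesis using linLh by blast
qed

end

context ppair begin

lemma swap: "ppair sW FW \<phi>W sV FV \<phi>V"
  unfolding ppair_def using V.psetup_axioms W.psetup_axioms by simp

lemma L_to_H:
  assumes LI: "L \<in> proj_isom sV FV sW FW"
  shows "\<exists>Lh \<in> Hset PV PW. L \<circ> \<phi>V = \<phi>W \<circ> Lh"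
proof -
  interpret WV: ppair sW FW \<phi>W sV FV \<phi>V by (rule swap)
  have lin: "Vector_Spaces.linear sV sW L" and bijL: "bij L"
    and wt: "\<And>x. proj_wt sW FW (L x) = proj_wt sV FV x"
    using LI unfolding proj_isom_def by auto
  interpret L: Vector_Spaces.linear sV sW L by (rule lin)
  interpret VW: vector_space_pair sV sW by unfold_locales
  obtain g where g: "Vector_Spaces.linear sW sV g" "g \<circ> L = id"
    using VW.linear_injective_left_inverse[OF lin] bijL bij_is_inj by blast
  have gL: "g (L v) = v" for v using g(2) by (metis comp_apply id_apply)
  have Lg: "L (g w) = w" for w using gL bijL by (metis bij_def surjD)
  have wtg: "proj_wt sV FV (g w) = proj_wt sW FW w" for w using wt[of "g w"] Lg by simp
  obtain Lh where Lh: "Vector_Spaces.linear (*s) (*s) Lh" "\<phi>W \<circ> Lh = L \<circ> \<phi>V"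
    "\<forall>x. hamming_wt (Lh x) \<le> hamming_wt x"
    using construct[OF lin] wt by fastforce
  obtain Mh where Mh: "Vector_Spaces.linear (*s) (*s) Mh" "\<phi>V \<circ> Mh = g \<circ> \<phi>W"
    "\<forall>x. hamming_wt (Mh x) \<le> hamming_wt x"
    using WV.construct[OF g(1)] wtg by fastforce
  have LhE: "\<phi>W (Lh x) = L (\<phi>V x)" for x using Lh(2) by (metis comp_apply)
  have MhE: "\<phi>V (Mh x) = g (\<phi>W x)" for x using Mh(2) by (metis comp_apply)
  have cML: "Mh \<circ> Lh = id"
  proof (rule lin_eq_axes)
    show "Vector_Spaces.linear (*s) (*s) (Mh \<circ> Lh)" by (rule Vector_Spaces.linear_compose[OF Lh(1) Mh(1)])
    show "Vector_Spaces.linear (*s) (*s) (id :: 'a^'i \<Rightarrow> 'a^'i)" by (rule vec.linear_id)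
    fix i :: 'i
    have "hamming_wt (Mh (Lh (axis i 1))) \<le> 1" using Mh(3) Lh(3) hw_axis1 by (meson order_trans)
    moreover have "\<phi>V (Mh (Lh (axis i 1))) = \<phi>V (axis i 1)" using MhE LhE gL by simp
    ultimately show "(Mh \<circ> Lh) (axis i 1) = id (axis i 1)" using V.uniq1 hw_axis1 by (metis id_apply comp_apply)
  qed
  have cLM: "Lh \<circ> Mh = id"
  proof (rule lin_eq_axes)
    show "Vector_Spaces.linear (*s) (*s) (Lh \<circ> Mh)" by (rule Vector_Spaces.linear_compose[OF Mh(1) Lh(1)])
    show "Vector_Spaces.linear (*s) (*s) (id :: 'a^'i \<Rightarrow> 'a^'i)" by (rule vec.linear_id)
    fix i :: 'i
    have "hamming_wt (Lh (Mh (axis i 1))) \<le> 1" using Mh(3) Lh(3) hw_axis1 by (meson order_trans)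
    moreover have "\<phi>W (Lh (Mh (axis i 1))) = \<phi>W (axis i 1)" using MhE LhE Lg by simp
    ultimately show "(Lh \<circ> Mh) (axis i 1) = id (axis i 1)" using W.uniq1 hw_axis1 by (metis id_apply comp_apply)
  qed
  have cML': "Mh (Lh x) = x" for x using cML by (metis comp_apply id_apply)
  have cLM': "Lh (Mh x) = x" for x using cLM by (metis comp_apply id_apply)
  have bijLh: "bij Lh" using cML' cLM' by (metis bij_betw_byWitness subset_UNIV UNIV_I)
  have hw: "hamming_wt (Lh x) = hamming_wt x" for x
    using Lh(3) Mh(3) cML' by (metis le_antisym)
  have ker: "\<phi>V x = 0 \<longleftrightarrow> \<phi>W (Lh x) = 0" for x
  proof -
    have "\<phi>W (Lh x) = L (\<phi>V x)" by (rule LhE)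
    moreover have "L (\<phi>V x) = 0 \<longleftrightarrow> \<phi>V x = 0" using gL L.zero by metis
    ultimately show ?thesis by simp
  qed
  have img: "Lh ` PV = PW"
  proof
    show "Lh ` PV \<subseteq> PW" using ker unfolding parent_code_def by auto
    show "PW \<subseteq> Lh ` PV"
    proof
      fix y assume "y \<in> PW"
      then have "Mh y \<in> PV" using ker cLM' unfolding parent_code_def by simp
      then show "y \<in> Lh ` PV" using cLM' by (metis image_eqI)
    qed
  qed
  have "Lh \<in> Hset PV PW" unfolding Hset_def hamming_isometry_def using Lh(1) bijLh hw img by auto
  moreover have "L \<circ> \<phi>V = \<phi>W \<circ> Lh" using Lh(2) by simp
  ultimately show ?thesis by blast
qed

lemma H_inj:
  assumes H1: "Lh1 \<in> Hset PV PW" and H2: "Lh2 \<in> Hset PV PW"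
    and e1: "L \<circ> \<phi>V = \<phi>W \<circ> Lh1" and e2: "L \<circ> \<phi>V = \<phi>W \<circ> Lh2"
  shows "Lh1 = Lh2"
proof (rule lin_eq_axes)
  show "Vector_Spaces.linear (*s) (*s) Lh1" "Vector_Spaces.linear (*s) (*s) Lh2"
    using H1 H2 unfolding Hset_def hamming_isometry_def by auto
  fix i :: 'i
  have "hamming_wt (Lh1 (axis i 1)) \<le> 1" "hamming_wt (Lh2 (axis i 1)) \<le> 1"
    using H1 H2 hw_axis1[of i] unfolding Hset_def hamming_isometry_def by auto
  moreover have "\<phi>W (Lh1 (axis i 1)) = \<phi>W (Lh2 (axis i 1))"
    using e1 e2 by (metis comp_apply)
  ultimately show "Lh1 (axis i 1) = Lh2 (axis i 1)" using W.uniq1 by blast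
qed

lemma ex1:
  assumes "Lh \<in> Hset PV PW"
  shows "\<exists>!L. L \<in> proj_isom sV FV sW FW \<and> L \<circ> \<phi>V = \<phi>W \<circ> Lh"
proof -
  have u: "L1 = L2" if "L1 \<circ> \<phi>V = \<phi>W \<circ> Lh" "L2 \<circ> \<phi>V = \<phi>W \<circ> Lh" for L1 L2 :: "'v \<Rightarrow> 'w"
  proof
    fix v obtain x where "v = \<phi>V x" using V.surj_phi by (metis surjD)
    then show "L1 v = L2 v" using that by (metis comp_apply)
  qed
  show ?thesis using H_to_L[OF assms] u by blast
qed

lemma Phi_prop:
  assumes "Lh \<in> Hset PV PW"
  shows "Phi sV FV \<phi>V sW FW \<phi>W Lh \<in> proj_isom sV FV sW FW \<and> Phi sV FV \<phi>V sW FW \<phi>W Lh \<circ> \<phi>V = \<phi>W \<circ> Lh"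
  unfolding Phi_def by (rule theI'[OF ex1[OF assms]])

lemma Phi_unique:
  assumes "Lh \<in> Hset PV PW" "L \<in> proj_isom sV FV sW FW" "L \<circ> \<phi>V = \<phi>W \<circ> Lh"
  shows "Phi sV FV \<phi>V sW FW \<phi>W Lh = L"
  using ex1[OF assms(1)] Phi_prop[OF assms(1)] assms(2,3) by blast

lemma Phi_bij: "bij_betw (Phi sV FV \<phi>V sW FW \<phi>W) (Hset PV PW) (proj_isom sV FV sW FW)"
proof (rule bij_betw_imageI)
  show "inj_on (Phi sV FV \<phi>V sW FW \<phi>W) (Hset PV PW)"
  proof (rule inj_onI)
    fix L1 L2 assume a: "L1 \<in> Hset PV PW" "L2 \<in> Hset PV PW"
      "Phi sV FV \<phi>V sW FW \<phi>W L1 = Phi sV FV \<phi>V sW FW \<phi>W L2"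
    show "L1 = L2" using H_inj[OF a(1) a(2)] Phi_prop[OF a(1)] Phi_prop[OF a(2)] a(3) by metis
  qed
  show "Phi sV FV \<phi>V sW FW \<phi>W ` Hset PV PW = proj_isom sV FV sW FW"
  proof
    show "Phi sV FV \<phi>V sW FW \<phi>W ` Hset PV PW \<subseteq> proj_isom sV FV sW FW" using Phi_prop by blast
    show "proj_isom sV FV sW FW \<subseteq> Phi sV FV \<phi>V sW FW \<phi>W ` Hset PV PW"
    proof
      fix L assume L: "L \<in> proj_isom sV FV sW FW"
      obtain Lh where "Lh \<in> Hset PV PW" "L \<circ> \<phi>V = \<phi>W \<circ> Lh" using L_to_H[OF L] by blast
      then show "L \<in> Phi sV FV \<phi>V sW FW \<phi>W ` Hset PV PW" using Phi_unique L by (metis image_eqI)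
    qed
  qed
qed

end

context ppair begin

lemma restrict_equiv:
  assumes H: "Lh \<in> Hset PV PW"
  defines "L \<equiv> Phi sV FV \<phi>V sW FW \<phi>W Lh"
  shows "(Lh ` (\<phi>V -` DV) = \<phi>W -` DW) \<longleftrightarrow> (L ` DV = DW)"
proof -
  have LP: "L \<in> proj_isom sV FV sW FW" "L \<circ> \<phi>V = \<phi>W \<circ> Lh" using Phi_prop[OF H] unfolding L_def by auto
  have injL: "inj L" using LP(1) unfolding proj_isom_def bij_def by auto
  have bijLh: "bij Lh" using H unfolding Hset_def hamming_isometry_def by auto
  have E: "L (\<phi>V x) = \<phi>W (Lh x)" for x using LP(2) by (metis comp_apply)
  have sV: "\<And>v. \<exists>x. v = \<phi>V x" using V.surj_phi by (metis surjD)
  have sW: "\<And>w. \<exists>x. w = \<phi>W x" using W.surj_phi by (metis surjD)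
  have sLh: "\<And>y. \<exists>x. y = Lh x" using bijLh by (metis bij_def surjD)
  show ?thesis
  proof
    assume a: "Lh ` (\<phi>V -` DV) = \<phi>W -` DW"
    show "L ` DV = DW"
    proof
      show "L ` DV \<subseteq> DW"
      proof
        fix w assume "w \<in> L ` DV"
        then obtain d where d: "d \<in> DV" "w = L d" by blast
        obtain x where x: "d = \<phi>V x" using sV by blast
        have "Lh x \<in> \<phi>W -` DW" using a d x by blast
        then show "w \<in> DW" using d x E by simp
      qed
      show "DW \<subseteq> L ` DV"
      proof
        fix w assume w: "w \<in> DW"
        obtain y where y: "w = \<phi>W y" using sW by blast
        then have "y \<in> Lh ` (\<phi>V -` DV)" using a w by simp
        then obtain x where "y = Lh x" "\<phi>V x \<in> DV" by blast
        then show "w \<in> L ` DV" using y E by (metis image_eqI)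
      qed
    qed
  next
    assume a: "L ` DV = DW"
    show "Lh ` (\<phi>V -` DV) = \<phi>W -` DW"
    proof
      show "Lh ` (\<phi>V -` DV) \<subseteq> \<phi>W -` DW"
      proof
        fix y assume "y \<in> Lh ` (\<phi>V -` DV)"
        then obtain x where x: "y = Lh x" "\<phi>V x \<in> DV" by blast
        have "L (\<phi>V x) \<in> DW" using a x(2) by blast
        then show "y \<in> \<phi>W -` DW" using x(1) E by simp
      qed
      show "\<phi>W -` DW \<subseteq> Lh ` (\<phi>V -` DV)"
      proof
        fix y assume y: "y \<in> \<phi>W -` DW"
        obtain x where x: "y = Lh x" using sLh by blast
        have "L (\<phi>V x) \<in> L ` DV" using a y x E by simp
        then have "\<phi>V x \<in> DV" using injL by (simp add: inj_image_mem_iff)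
        then show "y \<in> Lh ` (\<phi>V -` DV)" using x by blast
      qed
    qed
  qed
qed

lemma Phi_restrict:
  "bij_betw (Phi sV FV \<phi>V sW FW \<phi>W)
     {Lh \<in> Hset PV PW. Lh ` (\<phi>V -` DV) = \<phi>W -` DW}
     {L \<in> proj_isom sV FV sW FW. L ` DV = DW}"
proof (rule bij_betw_imageI)
  have "inj_on (Phi sV FV \<phi>V sW FW \<phi>W) (Hset PV PW)" using Phi_bij by (rule bij_betw_imp_inj_on)
  then show "inj_on (Phi sV FV \<phi>V sW FW \<phi>W) {Lh \<in> Hset PV PW. Lh ` (\<phi>V -` DV) = \<phi>W -` DW}"
    by (rule inj_on_subset) (rule Collect_subset)
  show "Phi sV FV \<phi>V sW FW \<phi>W ` {Lh \<in> Hset PV PW. Lh ` (\<phi>V -` DV) = \<phi>W -` DW}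
        = {L \<in> proj_isom sV FV sW FW. L ` DV = DW}"
  proof
    show "Phi sV FV \<phi>V sW FW \<phi>W ` {Lh \<in> Hset PV PW. Lh ` (\<phi>V -` DV) = \<phi>W -` DW}
        \<subseteq> {L \<in> proj_isom sV FV sW FW. L ` DV = DW}"
    proof
      fix L assume "L \<in> Phi sV FV \<phi>V sW FW \<phi>W ` {Lh \<in> Hset PV PW. Lh ` (\<phi>V -` DV) = \<phi>W -` DW}"
      then obtain Lh where Lh: "Lh \<in> Hset PV PW" "Lh ` (\<phi>V -` DV) = \<phi>W -` DW" "L = Phi sV FV \<phi>V sW FW \<phi>W Lh"
        by blast
      have "L \<in> proj_isom sV FV sW FW" using Phi_prop[OF Lh(1)] Lh(3) by simp
      moreover have "L ` DV = DW" using restrict_equiv[OF Lh(1)] Lh(2,3) by simp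
      ultimately show "L \<in> {L \<in> proj_isom sV FV sW FW. L ` DV = DW}" by simp
    qed
    show "{L \<in> proj_isom sV FV sW FW. L ` DV = DW} \<subseteq>
          Phi sV FV \<phi>V sW FW \<phi>W ` {Lh \<in> Hset PV PW. Lh ` (\<phi>V -` DV) = \<phi>W -` DW}"
    proof
      fix L assume L: "L \<in> {L \<in> proj_isom sV FV sW FW. L ` DV = DW}"
      then have "L \<in> Phi sV FV \<phi>V sW FW \<phi>W ` Hset PV PW" using bij_betw_imp_surj_on[OF Phi_bij] by simp
      then obtain Lh where Lh: "Lh \<in> Hset PV PW" "L = Phi sV FV \<phi>V sW FW \<phi>W Lh"
        by (rule imageE) simp
      have "L ` DV = DW" using L by simp
      then have "Lh ` (\<phi>V -` DV) = \<phi>W -` DW" using restrict_equiv[OF Lh(1)] Lh(2) by simp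
      then show "L \<in> Phi sV FV \<phi>V sW FW \<phi>W ` {Lh \<in> Hset PV PW. Lh ` (\<phi>V -` DV) = \<phi>W -` DW}"
        using Lh by (intro image_eqI[of _ _ Lh]) simp_all
    qed
  qed
qed

end

lemma Hset_comp:
  assumes "Lh \<in> Hset P1 P2" "Th \<in> Hset P2 P3"
  shows "Th \<circ> Lh \<in> Hset P1 P3"
proof -
  have a: "Vector_Spaces.linear (*s) (*s) Lh" "bij Lh" "\<And>x. hamming_wt (Lh x) = hamming_wt x" "Lh ` P1 = P2"
    using assms(1) unfolding Hset_def hamming_isometry_def by auto
  have b: "Vector_Spaces.linear (*s) (*s) Th" "bij Th" "\<And>x. hamming_wt (Th x) = hamming_wt x" "Th ` P2 = P3"
    using assms(2) unfolding Hset_def hamming_isometry_def by auto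
  have "Vector_Spaces.linear (*s) (*s) (Th \<circ> Lh)" by (rule Vector_Spaces.linear_compose[OF a(1) b(1)])
  moreover have "bij (Th \<circ> Lh)" by (rule bij_comp[OF a(2) b(2)])
  moreover have "\<forall>x. hamming_wt ((Th \<circ> Lh) x) = hamming_wt x" using a(3) b(3) by simp
  moreover have "(Th \<circ> Lh) ` P1 = P3" using a(4) b(4) by (metis image_comp)
  ultimately show ?thesis unfolding Hset_def hamming_isometry_def by blast
qed

lemma proj_isom_comp:
  assumes "L \<in> proj_isom s1 F1 s2 F2" "T \<in> proj_isom s2 F2 s3 F3"
  shows "T \<circ> L \<in> proj_isom s1 F1 s3 F3"
proof -
  have a: "Vector_Spaces.linear s1 s2 L" "bij L" "\<And>x. proj_wt s2 F2 (L x) = proj_wt s1 F1 x"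
    using assms(1) unfolding proj_isom_def by auto
  have b: "Vector_Spaces.linear s2 s3 T" "bij T" "\<And>x. proj_wt s3 F3 (T x) = proj_wt s2 F2 x"
    using assms(2) unfolding proj_isom_def by auto
  have "Vector_Spaces.linear s1 s3 (T \<circ> L)" by (rule Vector_Spaces.linear_compose[OF a(1) b(1)])
  moreover have "bij (T \<circ> L)" by (rule bij_comp[OF a(2) b(2)])
  moreover have "\<forall>x. proj_wt s3 F3 ((T \<circ> L) x) = proj_wt s1 F1 x" using a(3) b(3) by simp
  ultimately show ?thesis unfolding proj_isom_def by blast
qed

theorem theorem4p1:
  fixes sV :: "'a::{finite,field} \<Rightarrow> 'v::ab_group_add \<Rightarrow> 'v"
    and sW :: "'a \<Rightarrow> 'w::ab_group_add \<Rightarrow> 'w"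
    and FV :: "'v set" and FW :: "'w set"
    and \<phi>V :: "'a^'i::finite \<Rightarrow> 'v" and \<phi>W :: "'a^'i \<Rightarrow> 'w"
    and s1 :: "'a \<Rightarrow> 'u1::ab_group_add \<Rightarrow> 'u1"
    and s2 :: "'a \<Rightarrow> 'u2::ab_group_add \<Rightarrow> 'u2"
    and s3 :: "'a \<Rightarrow> 'u3::ab_group_add \<Rightarrow> 'u3"
    and F1 :: "'u1 set" and F2 :: "'u2 set" and F3 :: "'u3 set"
    and \<phi>1 :: "'a^'i \<Rightarrow> 'u1" and \<phi>2 :: "'a^'i \<Rightarrow> 'u2" and \<phi>3 :: "'a^'i \<Rightarrow> 'u3"
  assumes V: "parent_setup sV FV \<phi>V"
    and W: "parent_setup sW FW \<phi>W"
    and U1: "parent_setup s1 F1 \<phi>1"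
    and U2: "parent_setup s2 F2 \<phi>2"
    and U3: "parent_setup s3 F3 \<phi>3"
  shows
    \<comment> \<open>(a)\<close>
    "(\<forall>Lh \<in> Hset (parent_code \<phi>V) (parent_code \<phi>W).
        \<exists>!L. L \<in> proj_isom sV FV sW FW \<and> L \<circ> \<phi>V = \<phi>W \<circ> Lh)
     \<and> bij_betw (Phi sV FV \<phi>V sW FW \<phi>W)
         (Hset (parent_code \<phi>V) (parent_code \<phi>W)) (proj_isom sV FV sW FW)
     \<comment> \<open>(b)\<close>
     \<and> (\<forall>Lh \<in> Hset (parent_code \<phi>1) (parent_code \<phi>2).
        \<forall>Th \<in> Hset (parent_code \<phi>2) (parent_code \<phi>3).
          Phi s1 F1 \<phi>1 s3 F3 \<phi>3 (Th \<circ> Lh)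
            = Phi s2 F2 \<phi>2 s3 F3 \<phi>3 Th \<circ> Phi s1 F1 \<phi>1 s2 F2 \<phi>2 Lh)
     \<comment> \<open>(c)\<close>
     \<and> (\<forall>DV DW. module.subspace sV DV \<longrightarrow> module.subspace sW DW \<longrightarrow>
          bij_betw (Phi sV FV \<phi>V sW FW \<phi>W)
            {Lh \<in> Hset (parent_code \<phi>V) (parent_code \<phi>W). Lh ` (\<phi>V -` DV) = \<phi>W -` DW}
            {L \<in> proj_isom sV FV sW FW. L ` DV = DW})"
proof -
  interpret VW: ppair sV FV \<phi>V sW FW \<phi>W unfolding ppair_def psetup_def using V W by simp
  interpret P12: ppair s1 F1 \<phi>1 s2 F2 \<phi>2 unfolding ppair_def psetup_def using U1 U2 by simp
  interpret P23: ppair s2 F2 \<phi>2 s3 F3 \<phi>3 unfolding ppair_def psetup_def using U2 U3 by simp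
  interpret P13: ppair s1 F1 \<phi>1 s3 F3 \<phi>3 unfolding ppair_def psetup_def using U1 U3 by simp
  have a1: "\<forall>Lh \<in> Hset (parent_code \<phi>V) (parent_code \<phi>W).
        \<exists>!L. L \<in> proj_isom sV FV sW FW \<and> L \<circ> \<phi>V = \<phi>W \<circ> Lh"
    using VW.ex1 by blast
  have a2: "bij_betw (Phi sV FV \<phi>V sW FW \<phi>W)
         (Hset (parent_code \<phi>V) (parent_code \<phi>W)) (proj_isom sV FV sW FW)"
    by (rule VW.Phi_bij)
  have b: "\<forall>Lh \<in> Hset (parent_code \<phi>1) (parent_code \<phi>2).
        \<forall>Th \<in> Hset (parent_code \<phi>2) (parent_code \<phi>3).
          Phi s1 F1 \<phi>1 s3 F3 \<phi>3 (Th \<circ> Lh)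
            = Phi s2 F2 \<phi>2 s3 F3 \<phi>3 Th \<circ> Phi s1 F1 \<phi>1 s2 F2 \<phi>2 Lh"
  proof (intro ballI)
    fix Lh Th assume Lh: "Lh \<in> Hset (parent_code \<phi>1) (parent_code \<phi>2)"
      and Th: "Th \<in> Hset (parent_code \<phi>2) (parent_code \<phi>3)"
    have TL: "Th \<circ> Lh \<in> Hset (parent_code \<phi>1) (parent_code \<phi>3)" by (rule Hset_comp[OF Lh Th])
    have pL: "Phi s1 F1 \<phi>1 s2 F2 \<phi>2 Lh \<in> proj_isom s1 F1 s2 F2"
      "Phi s1 F1 \<phi>1 s2 F2 \<phi>2 Lh \<circ> \<phi>1 = \<phi>2 \<circ> Lh" using P12.Phi_prop[OF Lh] by auto
    have pT: "Phi s2 F2 \<phi>2 s3 F3 \<phi>3 Th \<in> proj_isom s2 F2 s3 F3"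
      "Phi s2 F2 \<phi>2 s3 F3 \<phi>3 Th \<circ> \<phi>2 = \<phi>3 \<circ> Th" using P23.Phi_prop[OF Th] by auto
    have "Phi s2 F2 \<phi>2 s3 F3 \<phi>3 Th \<circ> Phi s1 F1 \<phi>1 s2 F2 \<phi>2 Lh \<in> proj_isom s1 F1 s3 F3"
      by (rule proj_isom_comp[OF pL(1) pT(1)])
    moreover have "(Phi s2 F2 \<phi>2 s3 F3 \<phi>3 Th \<circ> Phi s1 F1 \<phi>1 s2 F2 \<phi>2 Lh) \<circ> \<phi>1 = \<phi>3 \<circ> (Th \<circ> Lh)"
      using pL(2) pT(2) by (metis comp_assoc)
    ultimately show "Phi s1 F1 \<phi>1 s3 F3 \<phi>3 (Th \<circ> Lh)
            = Phi s2 F2 \<phi>2 s3 F3 \<phi>3 Th \<circ> Phi s1 F1 \<phi>1 s2 F2 \<phi>2 Lh"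
      using P13.Phi_unique[OF TL] by blast
  qed
  have c: "\<forall>DV DW. module.subspace sV DV \<longrightarrow> module.subspace sW DW \<longrightarrow>
          bij_betw (Phi sV FV \<phi>V sW FW \<phi>W)
            {Lh \<in> Hset (parent_code \<phi>V) (parent_code \<phi>W). Lh ` (\<phi>V -` DV) = \<phi>W -` DW}
            {L \<in> proj_isom sV FV sW FW. L ` DV = DW}"
    using VW.Phi_restrict by blast
  show ?thesis using a1 a2 b c by blast
qed

end
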